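(* Let $G$ be a group and $f$ a circular homogeneous quasimorphism on $G$. (i) There exists a left-invariant total order $\preceq$ on $G$ such that the growth functions of the order induced by $\preceq$ via the left action of $G$ on itself are multiples of $f$. (ii) There exists a quasi-total triple $(G,\preceq_0,T)$ realizing $f$ such that $\preceq_0$ can be refined to a left-invariant total order $\preceq$ on $G$. (iii) If $f$ is unbounded on the center of $G$, then there exists a total triple $(G,\preceq,T)$ realizing $f$.
   Context: ${\rm Homeo}^+_{\mathbb{Z}}(\mathbb{R})$ denotes the group of orientation-preserving homeomorphisms of $\mathbb{R}$ commuting with $x\mapsto x+1$, and $T_{\mathbb{R}}(\phi)=\lim_{n\to\infty}\frac{\phi^n(0)}{n}$ is the translation number on it. A nonzero homogeneous quasimorphism $f$ on $G$ is circular if there is an injective homomorphism $\phi:G\to{\rm Homeo}^+_{\mathbb{Z}}(\mathbb{R})$ with $f=T_{\mathbb{R}}\circ\phi$. For a poset $(X,\preceq)$, an order-preserving bijection $T$ is dominant if for all $a,b$ some $n\in\mathbb{N}$ has $T^na\succ b$; $(X,\preceq,T)$ is a quasi-total triple if $T$ is dominant and for some $N\in\mathbb{N}$, for all $a,b$ there is $k\in\{0,\dots,N\}$ with $a\preceq T^kb$ or $b\preceq T^ka$; it is a total triple if moreover $\preceq$ is total. Given a group action on a poset $(X,\preceq)$, the induced order on $G$ is $g\leq h\Leftrightarrow\forall k\in G\,\forall x:(kg).x\preceq(kh).x$; for a bi-invariant order $\leq$ and a dominant $g$ ($g\geq e$, $g\ne e$, every $h$ has $g^n\geq h$ for some $n\geq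 0$), the growth function is $\gamma_g(h)=\lim_n\frac1n\inf\{p\in\mathbb{Z}:g^p\geq h^n\}$. A triple $(G,\preceq,T)$ realizes $f$ if the left multiplication action of $G$ on $G$ is by order-preserving maps commuting with $T$, effective and dominating (some $g,x,n\in\mathbb{N}$ with $gx\succeq T^nx$), and the growth functions of the induced order on $G$ are multiples of $f$. A refinement of a partial order $\preceq_0$ is a partial order $\preceq$ with $a\preceq_0 b\Rightarrow a\preceq b$. *)

theory Defs
  imports "HOL-Analysis.Analysis" "HOL-Algebra.Group"
begin

definition homeo_Z :: "(real \<Rightarrow> real) \<Rightarrow> bool" where
  "homeo_Z \<phi> \<longleftrightarrow> (\<exists>\<psi>. homeomorphism UNIV UNIV \<phi> \<psi>) \<and> mono \<phi> \<and> (\<forall>x. \<phi> (x + 1) = \<phi> x + 1)"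

definition transl_num :: "(real \<Rightarrow> real) \<Rightarrow> real" where
  "transl_num \<phi> = lim (\<lambda>n. (\<phi> ^^ n) 0 / real n)"

definition quasimorphism :: "('a, 'b) monoid_scheme \<Rightarrow> ('a \<Rightarrow> real) \<Rightarrow> bool" where
  "quasimorphism G f \<longleftrightarrow>
     (\<exists>D. \<forall>g\<in>carrier G. \<forall>h\<in>carrier G. \<bar>f (g \<otimes>\<^bsub>G\<^esub> h) - f g - f h\<bar> \<le> D)"

definition homogeneous_qm :: "('a, 'b) monoid_scheme \<Rightarrow> ('a \<Rightarrow> real) \<Rightarrow> bool" where
  "homogeneous_qm G f \<longleftrightarrow> quasimorphism G f \<and>
     (\<forall>g\<in>carrier G. \<forall>n::int. f (g [^]\<^bsub>G\<^esub> n) = of_int n * f g)"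

definition circular_qm :: "('a, 'b) monoid_scheme \<Rightarrow> ('a \<Rightarrow> real) \<Rightarrow> bool" where
  "circular_qm G f \<longleftrightarrow> homogeneous_qm G f \<and> (\<exists>g\<in>carrier G. f g \<noteq> 0) \<and>
     (\<exists>\<phi>. (\<forall>g\<in>carrier G. homeo_Z (\<phi> g)) \<and>
          (\<forall>g\<in>carrier G. \<forall>h\<in>carrier G. \<phi> (g \<otimes>\<^bsub>G\<^esub> h) = \<phi> g \<circ> \<phi> h) \<and>
          inj_on \<phi> (carrier G) \<and>
          (\<forall>g\<in>carrier G. f g = transl_num (\<phi> g)))"

definition group_center :: "('a, 'b) monoid_scheme \<Rightarrow> 'a set" where
  "group_center G = {z \<in> carrier G. \<forall>g\<in>carrier G. z \<otimes>\<^bsub>G\<^esub> g = g \<otimes>\<^bsub>G\<^esub> z}"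

definition partial_order_on_carrier :: "'a set \<Rightarrow> ('a \<Rightarrow> 'a \<Rightarrow> bool) \<Rightarrow> bool" where
  "partial_order_on_carrier X rel \<longleftrightarrow>
     (\<forall>a\<in>X. rel a a) \<and>
     (\<forall>a\<in>X. \<forall>b\<in>X. rel a b \<and> rel b a \<longrightarrow> a = b) \<and>
     (\<forall>a\<in>X. \<forall>b\<in>X. \<forall>c\<in>X. rel a b \<and> rel b c \<longrightarrow> rel a c)"

definition total_order_on_carrier :: "'a set \<Rightarrow> ('a \<Rightarrow> 'a \<Rightarrow> bool) \<Rightarrow> bool" where
  "total_order_on_carrier X rel \<longleftrightarrow> partial_order_on_carrier X rel \<and>
     (\<forall>a\<in>X. \<forall>b\<in>X. rel a b \<or> rel b a)"

definition left_invariant :: "('a, 'b) monoid_scheme \<Rightarrow> ('a \<Rightarrow> 'a \<Rightarrow> bool) \<Rightarrow> bool" where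
  "left_invariant G rel \<longleftrightarrow>
     (\<forall>g\<in>carrier G. \<forall>a\<in>carrier G. \<forall>b\<in>carrier G. rel a b \<longrightarrow> rel (g \<otimes>\<^bsub>G\<^esub> a) (g \<otimes>\<^bsub>G\<^esub> b))"

definition left_inv_total_order :: "('a, 'b) monoid_scheme \<Rightarrow> ('a \<Rightarrow> 'a \<Rightarrow> bool) \<Rightarrow> bool" where
  "left_inv_total_order G rel \<longleftrightarrow> total_order_on_carrier (carrier G) rel \<and> left_invariant G rel"

definition refines :: "'a set \<Rightarrow> ('a \<Rightarrow> 'a \<Rightarrow> bool) \<Rightarrow> ('a \<Rightarrow> 'a \<Rightarrow> bool) \<Rightarrow> bool" where
  "refines X rel rel0 \<longleftrightarrow> partial_order_on_carrier X rel \<and>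
     (\<forall>a\<in>X. \<forall>b\<in>X. rel0 a b \<longrightarrow> rel a b)"

text \<open>g <= h iff for all k, x: (k g).x \<preceq> (k h).x, the action being left multiplication.\<close>
definition induced_le :: "('a, 'b) monoid_scheme \<Rightarrow> ('a \<Rightarrow> 'a \<Rightarrow> bool) \<Rightarrow> 'a \<Rightarrow> 'a \<Rightarrow> bool" where
  "induced_le G rel g h \<longleftrightarrow>
     (\<forall>k\<in>carrier G. \<forall>x\<in>carrier G. rel ((k \<otimes>\<^bsub>G\<^esub> g) \<otimes>\<^bsub>G\<^esub> x) ((k \<otimes>\<^bsub>G\<^esub> h) \<otimes>\<^bsub>G\<^esub> x))"

definition dominant_elem :: "('a, 'b) monoid_scheme \<Rightarrow> ('a \<Rightarrow> 'a \<Rightarrow> bool) \<Rightarrow> 'a \<Rightarrow> bool" where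
  "dominant_elem G leq g \<longleftrightarrow> g \<in> carrier G \<and> leq \<one>\<^bsub>G\<^esub> g \<and> g \<noteq> \<one>\<^bsub>G\<^esub> \<and>
     (\<forall>h\<in>carrier G. \<exists>n::nat. leq h (g [^]\<^bsub>G\<^esub> n))"

text \<open>The sequence (1/n) inf {p in Z. g^p >= h^n}, whose limit is the growth function.\<close>
definition growth_seq :: "('a, 'b) monoid_scheme \<Rightarrow> ('a \<Rightarrow> 'a \<Rightarrow> bool) \<Rightarrow> 'a \<Rightarrow> 'a \<Rightarrow> nat \<Rightarrow> real" where
  "growth_seq G leq g h n =
     real_of_int (Inf {p::int. leq (h [^]\<^bsub>G\<^esub> n) (g [^]\<^bsub>G\<^esub> p)}) / real n"

definition growth_multiples :: "('a, 'b) monoid_scheme \<Rightarrow> ('a \<Rightarrow> 'a \<Rightarrow> bool) \<Rightarrow> ('a \<Rightarrow> real) \<Rightarrow> bool" where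
  "growth_multiples G leq f \<longleftrightarrow>
     (\<forall>g. dominant_elem G leq g \<longrightarrow>
        (\<exists>c::real. \<forall>h\<in>carrier G. growth_seq G leq g h \<longlonglongrightarrow> c * f h))"

definition order_preserving_bij :: "'a set \<Rightarrow> ('a \<Rightarrow> 'a \<Rightarrow> bool) \<Rightarrow> ('a \<Rightarrow> 'a) \<Rightarrow> bool" where
  "order_preserving_bij X rel T \<longleftrightarrow> bij_betw T X X \<and>
     (\<forall>a\<in>X. \<forall>b\<in>X. rel a b \<longrightarrow> rel (T a) (T b))"

definition dominant_map :: "'a set \<Rightarrow> ('a \<Rightarrow> 'a \<Rightarrow> bool) \<Rightarrow> ('a \<Rightarrow> 'a) \<Rightarrow> bool" where
  "dominant_map X rel T \<longleftrightarrow> order_preserving_bij X rel T \<and>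
     (\<forall>a\<in>X. \<forall>b\<in>X. \<exists>n::nat. n \<ge> 1 \<and> rel b ((T ^^ n) a) \<and> (T ^^ n) a \<noteq> b)"

definition quasi_total_triple :: "'a set \<Rightarrow> ('a \<Rightarrow> 'a \<Rightarrow> bool) \<Rightarrow> ('a \<Rightarrow> 'a) \<Rightarrow> bool" where
  "quasi_total_triple X rel T \<longleftrightarrow> partial_order_on_carrier X rel \<and> dominant_map X rel T \<and>
     (\<exists>N::nat. \<forall>a\<in>X. \<forall>b\<in>X. \<exists>k\<le>N. rel a ((T ^^ k) b) \<or> rel b ((T ^^ k) a))"

definition total_triple :: "'a set \<Rightarrow> ('a \<Rightarrow> 'a \<Rightarrow> bool) \<Rightarrow> ('a \<Rightarrow> 'a) \<Rightarrow> bool" where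
  "total_triple X rel T \<longleftrightarrow> quasi_total_triple X rel T \<and> total_order_on_carrier X rel"

definition realizes :: "('a, 'b) monoid_scheme \<Rightarrow> ('a \<Rightarrow> 'a \<Rightarrow> bool) \<Rightarrow> ('a \<Rightarrow> 'a) \<Rightarrow> ('a \<Rightarrow> real) \<Rightarrow> bool" where
  "realizes G rel T f \<longleftrightarrow>
     left_invariant G rel \<and>
     (\<forall>g\<in>carrier G. \<forall>x\<in>carrier G. T (g \<otimes>\<^bsub>G\<^esub> x) = g \<otimes>\<^bsub>G\<^esub> T x) \<and>
     (\<forall>g\<in>carrier G. (\<forall>x\<in>carrier G. g \<otimes>\<^bsub>G\<^esub> x = x) \<longrightarrow> g = \<one>\<^bsub>G\<^esub>) \<and>
     (\<exists>g\<in>carrier G. \<exists>x\<in>carrier G. \<exists>n::nat. n \<ge> 1 \<and> rel ((T ^^ n) x) (g \<otimes>\<^bsub>G\<^esub> x)) \<and>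
     growth_multiples G (induced_le G rel) f"

end

theory Submission
  imports Defs
begin



definition per1 :: "(real \<Rightarrow> real) \<Rightarrow> bool" where
  "per1 F \<longleftrightarrow> mono F \<and> (\<forall>x. F (x + 1) = F x + 1)"

lemma hz_per1: "homeo_Z F \<Longrightarrow> per1 F"
  by (simp add: homeo_Z_def per1_def)

lemma hz_cont: "homeo_Z F \<Longrightarrow> continuous_on UNIV F"
  unfolding homeo_Z_def homeomorphism_def by blast

lemma hz_inj: "homeo_Z F \<Longrightarrow> inj F"
  unfolding homeo_Z_def homeomorphism_def by (metis UNIV_I injI)

lemma hz_strict: "homeo_Z F \<Longrightarrow> x < y \<Longrightarrow> F x < F y"
proof -
  assume h: "homeo_Z F" "x < y"
  then have "F x \<le> F y" by (simp add: homeo_Z_def mono_def)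
  moreover have "F x \<noteq> F y" using hz_inj[OF h(1)] h(2) by (metis injD less_irrefl)
  ultimately show ?thesis by simp
qed

lemma per1_comp: "per1 F \<Longrightarrow> per1 H \<Longrightarrow> per1 (F \<circ> H)"
  unfolding per1_def mono_def by simp

lemma per1_id: "per1 id"
  unfolding per1_def mono_def by simp

lemma per1_pow: "per1 F \<Longrightarrow> per1 (F ^^ n)"
  by (induction n) (auto simp: per1_id per1_comp)

lemma per1_nat: "per1 F \<Longrightarrow> F (x + real k) = F x + real k"
proof (induction k arbitrary: x)
  case 0 then show ?case by simp
next
  case (Suc k)
  have "F (x + real (Suc k)) = F ((x + real k) + 1)" by (simp add: algebra_simps)
  also have "\<dots> = F (x + real k) + 1" using Suc.prems by (simp add: per1_def)
  finally show ?case using Suc by simp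
qed

lemma per1_int: "per1 F \<Longrightarrow> F (x + of_int k) = F x + of_int k"
proof (cases "k \<ge> 0")
  case True
  assume p: "per1 F"
  then show ?thesis using per1_nat[OF p, of x "nat k"] True by simp
next
  case False
  assume p: "per1 F"
  have "F ((x + of_int k) + real (nat (-k))) = F (x + of_int k) + real (nat (-k))"
    by (rule per1_nat[OF p])
  then show ?thesis using False by simp
qed

lemma per1_bound: assumes p: "per1 F" shows "\<bar>F y - y - F 0\<bar> \<le> 1"
proof -
  define k where "k = floor y"
  define r where "r = y - of_int k"
  have r0: "0 \<le> r" and r1: "r < 1" unfolding r_def k_def by linarith+
  have "F y = F (r + of_int k)" by (simp add: r_def)
  also have "\<dots> = F r + of_int k" by (rule per1_int[OF p])
  finally have e: "F y = F r + of_int k" .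
  have m: "mono F" using p by (simp add: per1_def)
  have "F 0 \<le> F r" using m r0 by (simp add: mono_def)
  moreover have "F r \<le> F 1" using m r1 by (simp add: mono_def)
  moreover have "F 1 = F 0 + 1" using p unfolding per1_def by (metis add_0)
  ultimately show ?thesis using e r0 r1 unfolding r_def by linarith
qed

lemma per1_quasi:
  assumes p: "per1 F"
  shows "\<bar>(F ^^ (m + n)) 0 - (F ^^ m) 0 - (F ^^ n) 0\<bar> \<le> 1"
proof -
  have "(F ^^ (m + n)) 0 = (F ^^ m) ((F ^^ n) 0)" by (simp add: funpow_add)
  then show ?thesis using per1_bound[OF per1_pow[OF p, of m], of "(F ^^ n) 0"] by simp
qed

lemma per1_mult:
  assumes p: "per1 F"
  shows "\<bar>(F ^^ (m * n)) 0 - real m * (F ^^ n) 0\<bar> \<le> real m"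
proof (induction m)
  case 0 then show ?case by simp
next
  case (Suc m)
  have "Suc m * n = n + m * n" by simp
  then have "\<bar>(F ^^ (Suc m * n)) 0 - (F ^^ n) 0 - (F ^^ (m * n)) 0\<bar> \<le> 1"
    using per1_quasi[OF p, of n "m * n"] by simp
  then show ?case using Suc by (simp add: algebra_simps)
qed

lemma per1_seq_close:
  assumes p: "per1 F" and n: "n \<ge> 1" and m: "m \<ge> 1"
  shows "\<bar>(F ^^ (m * n)) 0 / real (m * n) - (F ^^ n) 0 / real n\<bar> \<le> 1 / real n"
proof -
  have mn: "real m * real n > 0" using n m by simp
  have m0: "real m > 0" "real n > 0" using n m by auto
  have "(F ^^ (m * n)) 0 / real (m * n) - (F ^^ n) 0 / real n
      = ((F ^^ (m * n)) 0 - real m * (F ^^ n) 0) / (real m * real n)"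
    using m0 by (simp add: field_simps)
  then have "\<bar>(F ^^ (m * n)) 0 / real (m * n) - (F ^^ n) 0 / real n\<bar>
      = \<bar>(F ^^ (m * n)) 0 - real m * (F ^^ n) 0\<bar> / (real m * real n)"
    using mn by (simp add: abs_divide)
  also have "\<dots> \<le> real m / (real m * real n)"
    using per1_mult[OF p, of m n] mn by (intro divide_right_mono) auto
  also have "\<dots> = 1 / real n" using m0 by simp
  finally show ?thesis .
qed

lemma per1_transl:
  assumes p: "per1 F"
  shows "\<bar>(F ^^ n) 0 - real n * lim (\<lambda>k. (F ^^ k) 0 / real k)\<bar> \<le> 1"
proof -
  define b where "b = (\<lambda>k. (F ^^ k) 0 / real k)"
  have cl: "\<bar>b (m * n) - b n\<bar> \<le> 1 / real n" if "n \<ge> 1" "m \<ge> 1" for m n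
    using per1_seq_close[OF p that] by (simp add: b_def)
  have C: "Cauchy b"
  proof (rule metric_CauchyI)
    fix e :: real assume e: "e > 0"
    obtain M :: nat where M: "real M > 2 / e" using reals_Archimedean2 by blast
    have "2 / e > 0" using e by simp
    then have "real M > 0" using M by linarith
    then have M1: "M \<ge> 1" by simp
    have "\<forall>m\<ge>M. \<forall>n\<ge>M. dist (b m) (b n) < e"
    proof (intro allI impI)
      fix m n assume mM: "m \<ge> M" and nM: "n \<ge> M"
      have m1: "m \<ge> 1" "n \<ge> 1" using mM nM M1 by auto
      have a1: "\<bar>b (n * m) - b m\<bar> \<le> 1 / real m" using cl[of m n] m1 by simp
      have a2: "\<bar>b (m * n) - b n\<bar> \<le> 1 / real n" using cl[of n m] m1 by simp
      have "1 / real m \<le> 1 / real M" using mM M1 by (simp add: frac_le)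
      moreover have "1 / real n \<le> 1 / real M" using nM M1 by (simp add: frac_le)
      moreover have "1 / real M < e / 2" using M e M1
        by (simp add: field_simps)
      ultimately have "\<bar>b m - b n\<bar> < e" using a1 a2 by (simp add: mult.commute)
      then show "dist (b m) (b n) < e" by (simp add: dist_real_def)
    qed
    then show "\<exists>M. \<forall>m\<ge>M. \<forall>n\<ge>M. dist (b m) (b n) < e" by blast
  qed
  then have L: "b \<longlonglongrightarrow> lim b" by (simp add: Cauchy_convergent_iff convergent_LIMSEQ_iff)
  show ?thesis
  proof (cases "n = 0")
    case True then show ?thesis by simp
  next
    case False
    then have n1: "n \<ge> 1" by simp
    have sm: "strict_mono (\<lambda>m. Suc m * n)" using n1 by (intro strict_monoI) simp
    have L2: "(\<lambda>m. b (Suc m * n)) \<longlonglongrightarrow> lim b"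
      using LIMSEQ_subseq_LIMSEQ[OF L sm] by (simp add: o_def)
    have L3: "(\<lambda>m. \<bar>b (Suc m * n) - b n\<bar>) \<longlonglongrightarrow> \<bar>lim b - b n\<bar>"
      by (intro tendsto_intros L2)
    have "\<bar>lim b - b n\<bar> \<le> 1 / real n"
    proof (rule Lim_bounded[OF L3, of 0], intro allI impI)
      fix m :: nat
      show "\<bar>b (Suc m * n) - b n\<bar> \<le> 1 / real n" using cl[of n "Suc m"] n1 by simp
    qed
    then have "real n * \<bar>lim b - b n\<bar> \<le> real n * (1 / real n)"
      using n1 by (intro mult_left_mono) auto
    moreover have "\<bar>real n * lim b - real n * b n\<bar> = \<bar>real n\<bar> * \<bar>lim b - b n\<bar>"
      by (simp only: right_diff_distrib[symmetric] abs_mult)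
    moreover have "\<bar>real n\<bar> = real n" by simp
    ultimately have "\<bar>real n * lim b - real n * b n\<bar> \<le> 1" using n1 by simp
    moreover have "real n * b n = (F ^^ n) 0" using n1 by (simp add: b_def)
    ultimately show ?thesis by (simp add: b_def abs_minus_commute)
  qed
qed

lemma transl_bound:
  assumes h: "homeo_Z F"
  shows "\<bar>(F ^^ n) y - y - real n * transl_num F\<bar> \<le> 2"
proof -
  have p: "per1 F" by (rule hz_per1[OF h])
  have "\<bar>(F ^^ n) y - y - (F ^^ n) 0\<bar> \<le> 1" by (rule per1_bound[OF per1_pow[OF p]])
  moreover have "\<bar>(F ^^ n) 0 - real n * transl_num F\<bar> \<le> 1"
    using per1_transl[OF p, of n] by (simp add: transl_num_def)
  ultimately show ?thesis by linarith
qed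




locale circ = group G for G (structure) +
  fixes \<phi> :: "'a \<Rightarrow> real \<Rightarrow> real" and f :: "'a \<Rightarrow> real"
  assumes hz: "g \<in> carrier G \<Longrightarrow> homeo_Z (\<phi> g)"
  and hom: "g \<in> carrier G \<Longrightarrow> h \<in> carrier G \<Longrightarrow> \<phi> (g \<otimes> h) = \<phi> g \<circ> \<phi> h"
  and inj\<phi>: "inj_on \<phi> (carrier G)"
  and fdef: "g \<in> carrier G \<Longrightarrow> f g = transl_num (\<phi> g)"
  and hq: "homogeneous_qm G f"
  and nz: "\<exists>g\<in>carrier G. f g \<noteq> 0"
begin

lemma phi_app: "g \<in> carrier G \<Longrightarrow> h \<in> carrier G \<Longrightarrow> \<phi> (g \<otimes> h) y = \<phi> g (\<phi> h y)"
  using hom by simp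

lemma phi_one: "\<phi> \<one> y = y"
proof -
  have "\<phi> \<one> (\<phi> \<one> y) = \<phi> \<one> y" using phi_app[of \<one> \<one> y] by simp
  then show ?thesis using hz_inj[OF hz[of \<one>]] by (simp add: inj_def)
qed

lemma phi_pow: "g \<in> carrier G \<Longrightarrow> \<phi> (g [^] (n::nat)) = \<phi> g ^^ n"
proof (induction n)
  case 0 then show ?case using phi_one by (auto simp: fun_eq_iff)
next
  case (Suc n)
  have "\<phi> (g [^] Suc n) = \<phi> (g [^] n) \<circ> \<phi> g" using Suc.prems by (simp add: hom)
  also have "\<dots> = \<phi> g ^^ n \<circ> \<phi> g" using Suc by simp
  also have "\<dots> = \<phi> g ^^ Suc n" by (rule funpow_Suc_right[symmetric])
  finally show ?case .
qed

lemma f_inv: "g \<in> carrier G \<Longrightarrow> f (inv g) = - f g"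
proof -
  assume g: "g \<in> carrier G"
  have "f (g [^] (-1::int)) = of_int (-1) * f g" using hq g by (simp add: homogeneous_qm_def)
  moreover have "g [^] (-1::int) = inv g" using int_pow_neg[OF g, of 1] g by simp
  ultimately show ?thesis by simp
qed

lemma pow_bound:
  assumes g: "g \<in> carrier G"
  shows "\<bar>\<phi> (g [^] (p::int)) y - y - of_int p * f g\<bar> \<le> 2"
proof (cases "p \<ge> 0")
  case True
  then obtain n where p: "p = int n" by (metis nonneg_eq_int)
  have "g [^] p = g [^] n" using p by (simp add: int_pow_int)
  then show ?thesis using transl_bound[OF hz[OF g], of n y] phi_pow[OF g, of n] fdef[OF g] p by simp
next
  case False
  then obtain n where p: "p = - int n" by (metis nonneg_eq_int neg_0_le_iff_le le_cases minus_minus)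
  have ig: "inv g \<in> carrier G" using g by simp
  have "g [^] p = inv (g [^] n)" using p int_pow_neg_int[OF g] by simp
  also have "\<dots> = inv g [^] n" using nat_pow_inv[OF g] by simp
  finally have e: "g [^] p = inv g [^] n" .
  have T: "transl_num (\<phi> (inv g)) = - f g" using fdef[OF ig] f_inv[OF g] by simp
  have "\<bar>(\<phi> (inv g) ^^ n) y - y - real n * transl_num (\<phi> (inv g))\<bar> \<le> 2"
    by (rule transl_bound[OF hz[OF ig]])
  moreover have e': "g [^] (- int n) = inv g [^] n" using e p by simp
  ultimately show ?thesis using p by (simp add: e' phi_pow[OF ig] T)
qed

lemma bound1: "g \<in> carrier G \<Longrightarrow> \<bar>\<phi> g y - y - \<phi> g 0\<bar> \<le> 1"
  using per1_bound[OF hz_per1[OF hz]] by blast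

lemma strict: "g \<in> carrier G \<Longrightarrow> x < y \<Longrightarrow> \<phi> g x < \<phi> g y"
  using hz_strict[OF hz] by blast

lemma f_pos_exists: "\<exists>t\<in>carrier G. f t > 0"
proof -
  obtain g where g: "g \<in> carrier G" "f g \<noteq> 0" using nz by blast
  show ?thesis
  proof (cases "f g > 0")
    case True then show ?thesis using g by blast
  next
    case False
    then have "f (inv g) > 0" using g f_inv[OF g(1)] by simp
    then show ?thesis using g by (meson inv_closed)
  qed
qed

lemma lim_by_bound:
  fixes x :: "nat \<Rightarrow> real"
  assumes "\<And>n. n \<ge> 1 \<Longrightarrow> \<bar>x n - L\<bar> \<le> C / real n"
  shows "x \<longlonglongrightarrow> L"
proof -
  have "(\<lambda>n. x n - L) \<longlonglongrightarrow> 0"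
  proof (rule Lim_null_comparison[of _ "\<lambda>n. C / real n"])
    show "\<forall>\<^sub>F n in sequentially. norm (x n - L) \<le> C / real n"
      using assms by (auto simp: eventually_sequentially)
    show "(\<lambda>n. C / real n) \<longlonglongrightarrow> 0" by (rule lim_const_over_n)
  qed
  then show ?thesis by (simp add: LIM_zero_cancel)
qed

lemma abs_helper: "(d::real) > 0 \<Longrightarrow> a \<le> b + (d + 1) \<Longrightarrow> b - d \<le> a \<Longrightarrow> \<bar>a - b\<bar> \<le> d + 1"
  by (simp add: abs_le_iff)

lemma abs_helper2: "(n::real) > 0 \<Longrightarrow> \<bar>a - n * q\<bar> / n = \<bar>a / n - 1 / c * d\<bar>" if "q = d / c" for q c d
proof -
  assume n: "n > 0"
  have "a / n - q = (a - n * q) / n" using n by (simp add: field_simps)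
  then have "\<bar>a / n - q\<bar> = \<bar>a - n * q\<bar> / n" using n by (simp add: abs_divide)
  then show ?thesis using that by simp
qed

lemma growth:
  assumes li: "left_invariant G rel"
  and A: "\<And>a b. a \<in> carrier G \<Longrightarrow> b \<in> carrier G \<Longrightarrow> rel a b \<Longrightarrow> \<phi> a 0 \<le> \<phi> b 0"
  and B: "\<And>a b. a \<in> carrier G \<Longrightarrow> b \<in> carrier G \<Longrightarrow> (\<forall>y. \<phi> a y < \<phi> b y) \<Longrightarrow> rel a b"
  shows "growth_multiples G (induced_le G rel) f"
proof -
  have Le1: "\<phi> a 0 \<le> \<phi> b 0" if "a \<in> carrier G" "b \<in> carrier G" "induced_le G rel a b" for a b
  proof -
    have "rel ((\<one> \<otimes> a) \<otimes> \<one>) ((\<one> \<otimes> b) \<otimes> \<one>)" using that unfolding induced_le_def by blast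
    then have "rel a b" using that by simp
    then show ?thesis using A that by blast
  qed
  have Le2: "induced_le G rel a b" if ab: "a \<in> carrier G" "b \<in> carrier G" and lt: "\<forall>y. \<phi> a y < \<phi> b y" for a b
    unfolding induced_le_def
  proof (intro ballI)
    fix k x assume kx: "k \<in> carrier G" "x \<in> carrier G"
    have "\<forall>y. \<phi> ((k \<otimes> a) \<otimes> x) y < \<phi> ((k \<otimes> b) \<otimes> x) y"
      using kx ab lt strict[OF kx(1)] by (simp add: phi_app)
    then show "rel ((k \<otimes> a) \<otimes> x) ((k \<otimes> b) \<otimes> x)" using B kx ab by simp
  qed
  show ?thesis unfolding growth_multiples_def
  proof (intro allI impI)
    fix g assume dg: "dominant_elem G (induced_le G rel) g"
    then have g: "g \<in> carrier G" and dom: "\<forall>h\<in>carrier G. \<exists>n::nat. induced_le G rel h (g [^] n)"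
      by (auto simp: dominant_elem_def)
    have fg: "f g > 0"
    proof (rule ccontr)
      assume "\<not> f g > 0"
      then have fg0: "f g \<le> 0" by simp
      obtain t where t: "t \<in> carrier G" "f t > 0" using f_pos_exists by blast
      obtain m :: nat where m: "real m > 5 / f t" using reals_Archimedean2 by blast
      have mft: "real m * f t > 5" using m t(2) by (simp add: field_simps)
      define h where "h = t [^] m"
      have h: "h \<in> carrier G" using t by (simp add: h_def)
      have "\<phi> h 0 \<ge> 3"
        using pow_bound[OF t(1), of "int m" 0] mft by (simp add: h_def int_pow_int)
      moreover obtain n :: nat where "induced_le G rel h (g [^] n)" using dom h by blast
      then have "\<phi> h 0 \<le> \<phi> (g [^] n) 0" using Le1 h g by simp
      moreover have "\<phi> (g [^] n) 0 \<le> 2"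
      proof -
        have "\<bar>\<phi> (g [^] (int n)) 0 - 0 - of_int (int n) * f g\<bar> \<le> 2" by (rule pow_bound[OF g])
        moreover have "real n * f g \<le> 0" using fg0 by (simp add: mult_nonneg_nonpos)
        ultimately show ?thesis by (simp add: int_pow_int)
      qed
      ultimately show False by simp
    qed
    show "\<exists>c. \<forall>h\<in>carrier G. growth_seq G (induced_le G rel) g h \<longlonglongrightarrow> c * f h"
    proof (intro exI ballI)
      fix h assume h: "h \<in> carrier G"
      show "growth_seq G (induced_le G rel) g h \<longlonglongrightarrow> (1 / f g) * f h"
      proof (rule lim_by_bound[where C = "4 / f g + 1"])
        fix n :: nat assume n1: "n \<ge> 1"
        define S where "S = {p::int. induced_le G rel (h [^] n) (g [^] p)}"
        have hn: "h [^] n \<in> carrier G" using h by simp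
        have hb: "\<bar>\<phi> (h [^] n) y - y - real n * f h\<bar> \<le> 2" for y
          using pow_bound[OF h, of "int n" y] by (simp add: int_pow_int)
        have lower: "real n * f h - 4 \<le> of_int p * f g" if "p \<in> S" for p
        proof -
          have "\<phi> (h [^] n) 0 \<le> \<phi> (g [^] p) 0" using Le1[OF hn _ ] that g by (simp add: S_def)
          moreover have "\<bar>\<phi> (g [^] p) 0 - 0 - of_int p * f g\<bar> \<le> 2" by (rule pow_bound[OF g])
          ultimately show ?thesis using hb[of 0] by simp
        qed
        define p0 where "p0 = floor ((real n * f h + 4) / f g) + 1"
        have p0gt: "of_int p0 * f g > real n * f h + 4"
        proof -
          have "of_int p0 > (real n * f h + 4) / f g" unfolding p0_def by linarith
          then show ?thesis using fg by (simp add: field_simps)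
        qed
        have p0S: "p0 \<in> S"
        proof -
          have "\<forall>y. \<phi> (h [^] n) y < \<phi> (g [^] p0) y"
          proof
            fix y
            have "\<bar>\<phi> (g [^] p0) y - y - of_int p0 * f g\<bar> \<le> 2" by (rule pow_bound[OF g])
            then show "\<phi> (h [^] n) y < \<phi> (g [^] p0) y" using hb[of y] p0gt by simp
          qed
          then show ?thesis using Le2[OF hn] g by (simp add: S_def)
        qed
        define L where "L = ceiling ((real n * f h - 4) / f g)"
        have Lle: "L \<le> p" if "p \<in> S" for p
        proof -
          have "(real n * f h - 4) / f g \<le> of_int p" using lower[OF that] fg by (simp add: field_simps)
          then show ?thesis unfolding L_def by (simp add: ceiling_le_iff)
        qed
        have bdd: "bdd_below S" unfolding bdd_below_def using Lle by blast
        have I1: "Inf S \<le> p0" using cInf_lower[OF p0S bdd] .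
        have I2: "L \<le> Inf S" using cInf_greatest[of S L] p0S Lle by blast
        have r1: "real_of_int (Inf S) \<le> (real n * f h + 4) / f g + 1"
          using I1 unfolding p0_def by linarith
        have r2: "(real n * f h - 4) / f g \<le> real_of_int (Inf S)"
          using I2 unfolding L_def by linarith
        have gs: "growth_seq G (induced_le G rel) g h n = real_of_int (Inf S) / real n"
          by (simp add: growth_seq_def S_def)
        have npos: "real n > 0" using n1 by simp
        have e1: "(real n * f h + 4) / f g + 1 = real n * (f h / f g) + (4 / f g + 1)"
          using fg by (simp add: field_simps)
        have e2: "(real n * f h - 4) / f g = real n * (f h / f g) - 4 / f g"
          using fg by (simp add: field_simps)
        have "\<bar>real_of_int (Inf S) - real n * (f h / f g)\<bar> \<le> 4 / f g + 1"
        proof -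
          have "4 / f g > 0" using fg by simp
          moreover have u: "real_of_int (Inf S) \<le> real n * (f h / f g) + (4 / f g + 1)"
            using r1 unfolding e1 .
          moreover have l: "real n * (f h / f g) - 4 / f g \<le> real_of_int (Inf S)"
            using r2 unfolding e2 .
          ultimately show ?thesis by (rule abs_helper)
        qed
        then have "\<bar>real_of_int (Inf S) - real n * (f h / f g)\<bar> / real n \<le> (4 / f g + 1) / real n"
          using npos by (simp add: divide_right_mono)
        moreover have "\<bar>real_of_int (Inf S) - real n * (f h / f g)\<bar> / real n
            = \<bar>real_of_int (Inf S) / real n - 1 / f g * f h\<bar>"
          using abs_helper2[OF refl npos] by simp
        ultimately show "\<bar>growth_seq G (induced_le G rel) g h n - 1 / f g * f h\<bar> \<le> (4 / f g + 1) / real n"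
          using gs by simp
      qed
    qed
  qed
qed

end



definition sq :: "nat \<Rightarrow> real" where
  "sq n = (if n = 0 then 0 else from_nat_into \<rat> (n - 1))"

definition lexless :: "(real \<Rightarrow> real) \<Rightarrow> (real \<Rightarrow> real) \<Rightarrow> bool" where
  "lexless F H \<longleftrightarrow> (\<exists>n. F (sq n) < H (sq n) \<and> (\<forall>m<n. F (sq m) = H (sq m)))"

lemma sq_rats: "x \<in> \<rat> \<Longrightarrow> \<exists>n. sq n = x"
proof -
  assume x: "x \<in> \<rat>"
  obtain k where "from_nat_into \<rat> k = x" using from_nat_into_surj[OF countable_rat x] by blast
  then have "sq (Suc k) = x" by (simp add: sq_def)
  then show ?thesis by blast
qed

lemma lex_total:
  assumes cF: "continuous_on UNIV F" and cH: "continuous_on UNIV H" and ne: "F \<noteq> H"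
  shows "lexless F H \<or> lexless H F"
proof -
  have "\<exists>n. F (sq n) \<noteq> H (sq n)"
  proof (rule ccontr)
    assume "\<not> (\<exists>n. F (sq n) \<noteq> H (sq n))"
    then have q: "F x - H x = 0" if xq: "x \<in> \<rat>" for x
    proof -
      obtain n where "sq n = x" using sq_rats[OF xq] by blast
      then show ?thesis using \<open>\<not> (\<exists>n. F (sq n) \<noteq> H (sq n))\<close> by auto
    qed
    have c: "continuous_on (closure \<rat>) (\<lambda>x. F x - H x)"
      using cF cH by (auto intro: continuous_on_diff continuous_on_subset)
    have "F x - H x = 0" for x
      using continuous_constant_on_closure[OF c q, of x] Rats_closure_real by simp
    then have "F = H" by (auto simp: fun_eq_iff)
    then show False using ne by simp
  qed
  then obtain n where n: "F (sq n) \<noteq> H (sq n)" "\<forall>m<n. \<not> F (sq m) \<noteq> H (sq m)"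
    using exists_least_iff[of "\<lambda>n. F (sq n) \<noteq> H (sq n)"] by blast
  show ?thesis
  proof (cases "F (sq n) < H (sq n)")
    case True
    then have "lexless F H" unfolding lexless_def using n(2) by (intro exI[of _ n]) auto
    then show ?thesis by blast
  next
    case False
    then have "H (sq n) < F (sq n)" using n by simp
    then have "lexless H F" unfolding lexless_def using n(2) by (intro exI[of _ n]) auto
    then show ?thesis by blast
  qed
qed

lemma lex_asym: "lexless F H \<Longrightarrow> lexless H F \<Longrightarrow> False"
proof -
  assume "lexless F H" "lexless H F"
  then obtain n1 n2 where a: "F (sq n1) < H (sq n1)" "\<forall>m<n1. F (sq m) = H (sq m)"
    and b: "H (sq n2) < F (sq n2)" "\<forall>m<n2. H (sq m) = F (sq m)" unfolding lexless_def by blast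
  show False
  proof (cases n1 n2 rule: linorder_cases)
    case less then show ?thesis using a b by force
  next
    case equal then show ?thesis using a b by force
  next
    case greater then show ?thesis using a b by force
  qed
qed

lemma lex_trans: "lexless F H \<Longrightarrow> lexless H K \<Longrightarrow> lexless F K"
proof -
  assume "lexless F H" "lexless H K"
  then obtain n1 n2 where a: "F (sq n1) < H (sq n1)" "\<forall>m<n1. F (sq m) = H (sq m)"
    and b: "H (sq n2) < K (sq n2)" "\<forall>m<n2. H (sq m) = K (sq m)" unfolding lexless_def by blast
  show ?thesis unfolding lexless_def
  proof (cases n1 n2 rule: linorder_cases)
    case less
    then show "\<exists>n. F (sq n) < K (sq n) \<and> (\<forall>m<n. F (sq m) = K (sq m))" using a b
      by (intro exI[of _ n1]) auto
  next
    case equal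
    then show "\<exists>n. F (sq n) < K (sq n) \<and> (\<forall>m<n. F (sq m) = K (sq m))" using a b
      by (intro exI[of _ n1]) auto
  next
    case greater
    then show "\<exists>n. F (sq n) < K (sq n) \<and> (\<forall>m<n. F (sq m) = K (sq m))" using a b
      by (intro exI[of _ n2]) auto
  qed
qed

lemma lex_comp: "(\<And>x y. x < y \<Longrightarrow> K x < K y) \<Longrightarrow> lexless F H \<Longrightarrow> lexless (K \<circ> F) (K \<circ> H)"
  unfolding lexless_def
proof (elim exE conjE)
  fix n assume K: "\<And>x y. x < y \<Longrightarrow> K x < K y" and n: "F (sq n) < H (sq n)" "\<forall>m<n. F (sq m) = H (sq m)"
  show "\<exists>n. (K \<circ> F) (sq n) < (K \<circ> H) (sq n) \<and> (\<forall>m<n. (K \<circ> F) (sq m) = (K \<circ> H) (sq m))"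
    using K[OF n(1)] n(2) by (intro exI[of _ n]) simp
qed

lemma lex_0: "F 0 < H 0 \<Longrightarrow> lexless F H"
  unfolding lexless_def by (intro exI[of _ 0]) (simp add: sq_def)

lemma lex_le0: "lexless F H \<Longrightarrow> F 0 \<le> H 0"
  unfolding lexless_def
proof (elim exE conjE)
  fix n assume n: "F (sq n) < H (sq n)" "\<forall>m<n. F (sq m) = H (sq m)"
  show "F 0 \<le> H 0"
  proof (cases "n = 0")
    case True then show ?thesis using n by (simp add: sq_def)
  next
    case False then have "F (sq 0) = H (sq 0)" using n by simp
    then show ?thesis by (simp add: sq_def)
  qed
qed

context circ
begin

definition lexrel :: "'a \<Rightarrow> 'a \<Rightarrow> bool" where
  "lexrel a b \<longleftrightarrow> a = b \<or> lexless (\<phi> a) (\<phi> b)"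

definition rel0 :: "'a \<Rightarrow> 'a \<Rightarrow> bool" where
  "rel0 a b \<longleftrightarrow> a = b \<or> (\<forall>y. \<phi> a y < \<phi> b y)"

lemma lexrel_order: "left_inv_total_order G lexrel"
  unfolding left_inv_total_order_def total_order_on_carrier_def partial_order_on_carrier_def left_invariant_def
proof (intro conjI ballI impI)
  fix a assume "a \<in> carrier G" then show "lexrel a a" by (simp add: lexrel_def)
next
  fix a b assume "a \<in> carrier G" "b \<in> carrier G" "lexrel a b \<and> lexrel b a"
  then show "a = b" unfolding lexrel_def using lex_asym by blast
next
  fix a b c assume "a \<in> carrier G" "b \<in> carrier G" "c \<in> carrier G" "lexrel a b \<and> lexrel b c"
  then show "lexrel a c" unfolding lexrel_def using lex_trans by blast
next
  fix a b assume ab: "a \<in> carrier G" "b \<in> carrier G"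
  show "lexrel a b \<or> lexrel b a"
  proof (cases "a = b")
    case True then show ?thesis by (simp add: lexrel_def)
  next
    case False
    then have "\<phi> a \<noteq> \<phi> b" using inj\<phi> ab by (meson inj_on_def)
    then show ?thesis using lex_total[OF hz_cont[OF hz[OF ab(1)]] hz_cont[OF hz[OF ab(2)]]]
      by (auto simp: lexrel_def)
  qed
next
  fix g a b assume gab: "g \<in> carrier G" "a \<in> carrier G" "b \<in> carrier G" "lexrel a b"
  show "lexrel (g \<otimes> a) (g \<otimes> b)"
  proof (cases "a = b")
    case True then show ?thesis by (simp add: lexrel_def)
  next
    case False
    then have "lexless (\<phi> a) (\<phi> b)" using gab by (simp add: lexrel_def)
    then have "lexless (\<phi> g \<circ> \<phi> a) (\<phi> g \<circ> \<phi> b)" using lex_comp strict[OF gab(1)] by blast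
    then show ?thesis using gab by (simp add: lexrel_def hom)
  qed
qed

lemma lexrel_A: "a \<in> carrier G \<Longrightarrow> b \<in> carrier G \<Longrightarrow> lexrel a b \<Longrightarrow> \<phi> a 0 \<le> \<phi> b 0"
  unfolding lexrel_def using lex_le0 by auto

lemma lexrel_B0: "\<phi> a 0 < \<phi> b 0 \<Longrightarrow> lexrel a b"
  unfolding lexrel_def using lex_0 by auto

lemma lexrel_B: "a \<in> carrier G \<Longrightarrow> b \<in> carrier G \<Longrightarrow> (\<forall>y. \<phi> a y < \<phi> b y) \<Longrightarrow> lexrel a b"
  using lexrel_B0 by blast

lemma lexrel_growth: "growth_multiples G (induced_le G lexrel) f"
  by (rule growth[OF _ lexrel_A lexrel_B])
    (use lexrel_order in \<open>simp add: left_inv_total_order_def\<close>)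

lemma rel0_po: "partial_order_on_carrier (carrier G) rel0"
  unfolding partial_order_on_carrier_def
proof (intro conjI ballI impI)
  fix a assume "a \<in> carrier G" then show "rel0 a a" by (simp add: rel0_def)
next
  fix a b assume "a \<in> carrier G" "b \<in> carrier G" "rel0 a b \<and> rel0 b a"
  then have "a = b \<or> (\<forall>y. \<phi> a y < \<phi> b y)" "b = a \<or> (\<forall>y. \<phi> b y < \<phi> a y)"
    by (auto simp: rel0_def)
  then show "a = b"
  proof (cases "a = b")
    case False
    then have "\<phi> a 0 < \<phi> b 0" "\<phi> b 0 < \<phi> a 0" using \<open>a = b \<or> _\<close> \<open>b = a \<or> _\<close> by auto
    then show ?thesis by simp
  qed simp
next
  fix a b c assume "a \<in> carrier G" "b \<in> carrier G" "c \<in> carrier G" "rel0 a b \<and> rel0 b c"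
  then have ab: "a = b \<or> (\<forall>y. \<phi> a y < \<phi> b y)" and bc: "b = c \<or> (\<forall>y. \<phi> b y < \<phi> c y)"
    by (auto simp: rel0_def)
  show "rel0 a c"
  proof (cases "a = b")
    case True then show ?thesis using bc by (simp add: rel0_def)
  next
    case False
    then have ab': "\<forall>y. \<phi> a y < \<phi> b y" using ab by blast
    show ?thesis
    proof (cases "b = c")
      case True then show ?thesis using ab by (simp add: rel0_def)
    next
      case False
      then have "\<forall>y. \<phi> b y < \<phi> c y" using bc by blast
      then have "\<forall>y. \<phi> a y < \<phi> c y" using ab' by (meson less_trans)
      then show ?thesis by (simp add: rel0_def)
    qed
  qed
qed

lemma rel0_li: "left_invariant G rel0"
  unfolding left_invariant_def
proof (intro ballI impI)
  fix g a b assume gab: "g \<in> carrier G" "a \<in> carrier G" "b \<in> carrier G" "rel0 a b"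
  show "rel0 (g \<otimes> a) (g \<otimes> b)"
  proof (cases "a = b")
    case True then show ?thesis by (simp add: rel0_def)
  next
    case False
    then have "\<forall>y. \<phi> a y < \<phi> b y" using gab by (simp add: rel0_def)
    then have "\<forall>y. \<phi> g (\<phi> a y) < \<phi> g (\<phi> b y)" using strict[OF gab(1)] by blast
    then show ?thesis using gab by (simp add: rel0_def phi_app)
  qed
qed

lemma rel0_A: "a \<in> carrier G \<Longrightarrow> b \<in> carrier G \<Longrightarrow> rel0 a b \<Longrightarrow> \<phi> a 0 \<le> \<phi> b 0"
proof -
  assume "rel0 a b"
  then have "a = b \<or> (\<forall>y. \<phi> a y < \<phi> b y)" by (simp add: rel0_def)
  then show ?thesis by (metis less_imp_le order_refl)
qed

lemma rel0_growth: "growth_multiples G (induced_le G rel0) f"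
proof (rule growth[OF rel0_li rel0_A])
  fix a b assume "\<forall>y. \<phi> a y < \<phi> b y"
  then show "rel0 a b" unfolding rel0_def by (rule disjI2)
qed

lemma lexrel_refines: "refines (carrier G) lexrel rel0"
  unfolding refines_def
proof (intro conjI ballI impI)
  show "partial_order_on_carrier (carrier G) lexrel"
    using lexrel_order by (simp add: left_inv_total_order_def total_order_on_carrier_def)
  fix a b assume "a \<in> carrier G" "b \<in> carrier G" "rel0 a b"
  then show "lexrel a b"
  proof (cases "a = b")
    case True then show ?thesis by (simp add: lexrel_def)
  next
    case False
    then have "\<phi> a 0 < \<phi> b 0" using \<open>rel0 a b\<close> by (simp add: rel0_def)
    then show ?thesis by (rule lexrel_B0)
  qed
qed

lemma Tpow: "x \<in> carrier G \<Longrightarrow> t \<in> carrier G \<Longrightarrow> ((\<lambda>x. x \<otimes> t) ^^ n) x = x \<otimes> t [^] n"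
proof (induction n)
  case 0 then show ?case by simp
next
  case (Suc n) then show ?case by (simp add: m_assoc)
qed

lemma Tbij: "t \<in> carrier G \<Longrightarrow> bij_betw (\<lambda>x. x \<otimes> t) (carrier G) (carrier G)"
  unfolding bij_betw_def
proof (intro conjI)
  assume t: "t \<in> carrier G"
  show "inj_on (\<lambda>x. x \<otimes> t) (carrier G)" using t by (intro inj_onI) simp
  show "(\<lambda>x. x \<otimes> t) ` carrier G = carrier G"
  proof
    show "(\<lambda>x. x \<otimes> t) ` carrier G \<subseteq> carrier G" using t by auto
    show "carrier G \<subseteq> (\<lambda>x. x \<otimes> t) ` carrier G"
    proof
      fix y assume y: "y \<in> carrier G"
      have "y = (y \<otimes> inv t) \<otimes> t" using y t by (simp add: m_assoc)
      then show "y \<in> (\<lambda>x. x \<otimes> t) ` carrier G" using y t by blast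
    qed
  qed
qed

lemma domlem:
  assumes a: "a \<in> carrier G" and b: "b \<in> carrier G" and t: "t \<in> carrier G"
  and n: "real n * f t > \<phi> b 0 - \<phi> a 0 + 4"
  shows "\<phi> b y < \<phi> (a \<otimes> t [^] n) y"
proof -
  have tn: "t [^] n \<in> carrier G" using t by simp
  define z where "z = \<phi> (t [^] n) y"
  have "\<bar>\<phi> (t [^] (int n)) y - y - of_int (int n) * f t\<bar> \<le> 2" by (rule pow_bound[OF t])
  then have z: "z \<ge> y + real n * f t - 2" unfolding z_def by (simp add: int_pow_int)
  have "\<phi> (a \<otimes> t [^] n) y = \<phi> a z" using a tn by (simp add: phi_app z_def)
  moreover have "\<phi> a z \<ge> z + \<phi> a 0 - 1" using bound1[OF a, of z] by simp
  moreover have "\<phi> b y \<le> y + \<phi> b 0 + 1" using bound1[OF b, of y] by simp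
  ultimately show ?thesis using z n by simp
qed

lemma exists_n: "c > 0 \<Longrightarrow> \<exists>n::nat. n \<ge> 1 \<and> real n * c > X"
proof -
  assume c: "c > 0"
  obtain n :: nat where n: "real n > X / c" using reals_Archimedean2 by blast
  have "real n * c > X" using n c by (simp add: field_simps)
  moreover have "real (Suc n) * c \<ge> real n * c" using c by (simp add: field_simps)
  ultimately show ?thesis by (intro exI[of _ "Suc n"]) simp
qed

lemma realizes_gen:
  assumes li: "left_invariant G rel" and t: "t \<in> carrier G" and r: "rel t t"
  and gr: "growth_multiples G (induced_le G rel) f"
  shows "realizes G rel (\<lambda>x. x \<otimes> t) f"
  unfolding realizes_def
proof (intro conjI ballI impI)
  show "left_invariant G rel" by (rule li)
  show "growth_multiples G (induced_le G rel) f" by (rule gr)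
  fix g x assume "g \<in> carrier G" "x \<in> carrier G"
  then show "g \<otimes> x \<otimes> t = g \<otimes> (x \<otimes> t)" using t by (simp add: m_assoc)
next
  fix g assume g: "g \<in> carrier G" "\<forall>x\<in>carrier G. g \<otimes> x = x"
  then show "g = \<one>" by (metis one_closed r_one)
next
  show "\<exists>g\<in>carrier G. \<exists>x\<in>carrier G. \<exists>n\<ge>1. rel (((\<lambda>x. x \<otimes> t) ^^ n) x) (g \<otimes> x)"
    using t r by (intro bexI[of _ t] bexI[of _ \<one>] exI[of _ 1]) auto
qed

end




context circ
begin

lemma rel0_qt:
  assumes t: "t \<in> carrier G" and ft: "f t > 0"
  shows "quasi_total_triple (carrier G) rel0 (\<lambda>x. x \<otimes> t)"
  unfolding quasi_total_triple_def dominant_map_def order_preserving_bij_def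
proof (intro conjI)
  show "partial_order_on_carrier (carrier G) rel0" by (rule rel0_po)
  show "bij_betw (\<lambda>x. x \<otimes> t) (carrier G) (carrier G)" by (rule Tbij[OF t])
  show "\<forall>a\<in>carrier G. \<forall>b\<in>carrier G. rel0 a b \<longrightarrow> rel0 (a \<otimes> t) (b \<otimes> t)"
  proof (intro ballI impI)
    fix a b assume ab: "a \<in> carrier G" "b \<in> carrier G" "rel0 a b"
    show "rel0 (a \<otimes> t) (b \<otimes> t)"
    proof (cases "a = b")
      case True then show ?thesis by (simp add: rel0_def)
    next
      case False
      then have "\<forall>y. \<phi> a y < \<phi> b y" using ab by (simp add: rel0_def)
      then have "\<forall>y. \<phi> (a \<otimes> t) y < \<phi> (b \<otimes> t) y" using ab t by (simp add: phi_app)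
      then show ?thesis unfolding rel0_def by (rule disjI2)
    qed
  qed
  show "\<forall>a\<in>carrier G. \<forall>b\<in>carrier G. \<exists>n::nat. n \<ge> 1 \<and> rel0 b (((\<lambda>x. x \<otimes> t) ^^ n) a) \<and> ((\<lambda>x. x \<otimes> t) ^^ n) a \<noteq> b"
  proof (intro ballI)
    fix a b assume a: "a \<in> carrier G" and b: "b \<in> carrier G"
    obtain n :: nat where n: "n \<ge> 1" "real n * f t > \<phi> b 0 - \<phi> a 0 + 4"
      using exists_n[OF ft] by blast
    have lt: "\<forall>y. \<phi> b y < \<phi> (a \<otimes> t [^] n) y" using domlem[OF a b t n(2)] by blast
    have "rel0 b (a \<otimes> t [^] n)" unfolding rel0_def using lt by (rule disjI2)
    moreover have "a \<otimes> t [^] n \<noteq> b" using lt by (metis less_irrefl)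
    ultimately show "\<exists>n::nat. n \<ge> 1 \<and> rel0 b (((\<lambda>x. x \<otimes> t) ^^ n) a) \<and> ((\<lambda>x. x \<otimes> t) ^^ n) a \<noteq> b"
      using n(1) Tpow[OF a t, of n] by metis
  qed
  show "\<exists>N::nat. \<forall>a\<in>carrier G. \<forall>b\<in>carrier G. \<exists>k\<le>N. rel0 a (((\<lambda>x. x \<otimes> t) ^^ k) b) \<or> rel0 b (((\<lambda>x. x \<otimes> t) ^^ k) a)"
  proof -
    obtain N :: nat where N: "real N * f t > 6" using exists_n[OF ft] by blast
    have "\<forall>a\<in>carrier G. \<forall>b\<in>carrier G. rel0 a (((\<lambda>x. x \<otimes> t) ^^ N) b) \<or> rel0 b (((\<lambda>x. x \<otimes> t) ^^ N) a)"
    proof (intro ballI)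
      fix a b assume a: "a \<in> carrier G" and b: "b \<in> carrier G"
      show "rel0 a (((\<lambda>x. x \<otimes> t) ^^ N) b) \<or> rel0 b (((\<lambda>x. x \<otimes> t) ^^ N) a)"
      proof (cases "\<phi> b 0 - \<phi> a 0 \<le> 2")
        case True
        then have "real N * f t > \<phi> b 0 - \<phi> a 0 + 4" using N by simp
        then have "\<forall>y. \<phi> b y < \<phi> (a \<otimes> t [^] N) y" using domlem[OF a b t] by blast
        then have "rel0 b (a \<otimes> t [^] N)" unfolding rel0_def by (rule disjI2)
        then show ?thesis using Tpow[OF a t, of N] by simp
      next
        case False
        then have "real N * f t > \<phi> a 0 - \<phi> b 0 + 4" using N by simp
        then have "\<forall>y. \<phi> a y < \<phi> (b \<otimes> t [^] N) y" using domlem[OF b a t] by blast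
        then have "rel0 a (b \<otimes> t [^] N)" unfolding rel0_def by (rule disjI2)
        then show ?thesis using Tpow[OF b t, of N] by simp
      qed
    qed
    then show ?thesis by blast
  qed
qed

lemma lex_tt:
  assumes t: "t \<in> carrier G" and ft: "f t > 0" and cen: "\<And>g. g \<in> carrier G \<Longrightarrow> t \<otimes> g = g \<otimes> t"
  shows "total_triple (carrier G) lexrel (\<lambda>x. x \<otimes> t)"
proof -
  have lo: "left_inv_total_order G lexrel" by (rule lexrel_order)
  then have tot: "total_order_on_carrier (carrier G) lexrel" and li: "left_invariant G lexrel"
    by (auto simp: left_inv_total_order_def)
  then have po: "partial_order_on_carrier (carrier G) lexrel" by (simp add: total_order_on_carrier_def)
  have totl: "\<forall>a\<in>carrier G. \<forall>b\<in>carrier G. lexrel a b \<or> lexrel b a"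
    using tot by (simp add: total_order_on_carrier_def)
  have qt: "quasi_total_triple (carrier G) lexrel (\<lambda>x. x \<otimes> t)"
    unfolding quasi_total_triple_def dominant_map_def order_preserving_bij_def
  proof (intro conjI)
    show "partial_order_on_carrier (carrier G) lexrel" by (rule po)
    show "bij_betw (\<lambda>x. x \<otimes> t) (carrier G) (carrier G)" by (rule Tbij[OF t])
    show "\<forall>a\<in>carrier G. \<forall>b\<in>carrier G. lexrel a b \<longrightarrow> lexrel (a \<otimes> t) (b \<otimes> t)"
    proof (intro ballI impI)
      fix a b assume ab: "a \<in> carrier G" "b \<in> carrier G" "lexrel a b"
      have "lexrel (t \<otimes> a) (t \<otimes> b)" using li ab t unfolding left_invariant_def by blast
      then show "lexrel (a \<otimes> t) (b \<otimes> t)" using cen ab by simp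
    qed
    show "\<forall>a\<in>carrier G. \<forall>b\<in>carrier G. \<exists>n::nat. n \<ge> 1 \<and> lexrel b (((\<lambda>x. x \<otimes> t) ^^ n) a) \<and> ((\<lambda>x. x \<otimes> t) ^^ n) a \<noteq> b"
    proof (intro ballI)
      fix a b assume a: "a \<in> carrier G" and b: "b \<in> carrier G"
      obtain n :: nat where n: "n \<ge> 1" "real n * f t > \<phi> b 0 - \<phi> a 0 + 4"
        using exists_n[OF ft] by blast
      have lt: "\<phi> b 0 < \<phi> (a \<otimes> t [^] n) 0" using domlem[OF a b t n(2)] by blast
      have "lexrel b (a \<otimes> t [^] n)" using lt by (rule lexrel_B0)
      moreover have "a \<otimes> t [^] n \<noteq> b" using lt by (metis less_irrefl)
      ultimately show "\<exists>n::nat. n \<ge> 1 \<and> lexrel b (((\<lambda>x. x \<otimes> t) ^^ n) a) \<and> ((\<lambda>x. x \<otimes> t) ^^ n) a \<noteq> b"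
        using n(1) Tpow[OF a t, of n] by metis
    qed
    show "\<exists>N::nat. \<forall>a\<in>carrier G. \<forall>b\<in>carrier G. \<exists>k\<le>N. lexrel a (((\<lambda>x. x \<otimes> t) ^^ k) b) \<or> lexrel b (((\<lambda>x. x \<otimes> t) ^^ k) a)"
      using totl by (intro exI[of _ 0]) auto
  qed
  show ?thesis unfolding total_triple_def using qt tot by blast
qed

lemma central_inv:
  assumes z: "z \<in> carrier G" and comm: "\<And>g. g \<in> carrier G \<Longrightarrow> z \<otimes> g = g \<otimes> z" and g: "g \<in> carrier G"
  shows "inv z \<otimes> g = g \<otimes> inv z"
proof -
  have "inv z \<otimes> g = inv z \<otimes> ((g \<otimes> z) \<otimes> inv z)" using z g by (simp add: m_assoc)
  also have "\<dots> = inv z \<otimes> ((z \<otimes> g) \<otimes> inv z)" using comm[OF g] by simp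
  also have "\<dots> = g \<otimes> inv z" using z g by (simp add: m_assoc[symmetric])
  finally show ?thesis .
qed

end

theorem proposition4p6:
  fixes G :: "('a, 'b) monoid_scheme" and f :: "'a \<Rightarrow> real"
  assumes "group G" and "circular_qm G f"
  shows "(\<exists>rel. left_inv_total_order G rel \<and> growth_multiples G (induced_le G rel) f)
       \<and> (\<exists>rel0 T rel. quasi_total_triple (carrier G) rel0 T \<and> realizes G rel0 T f \<and>
                     refines (carrier G) rel rel0 \<and> left_inv_total_order G rel)
       \<and> ((\<not> (\<exists>B. \<forall>z\<in>group_center G. \<bar>f z\<bar> \<le> B)) \<longrightarrow>
           (\<exists>rel T. total_triple (carrier G) rel T \<and> realizes G rel T f))"
proof -
  from assms(2) obtain \<phi> where
    p1: "\<forall>g\<in>carrier G. homeo_Z (\<phi> g)" and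
    p2: "\<forall>g\<in>carrier G. \<forall>h\<in>carrier G. \<phi> (g \<otimes>\<^bsub>G\<^esub> h) = \<phi> g \<circ> \<phi> h" and
    p3: "inj_on \<phi> (carrier G)" and p4: "\<forall>g\<in>carrier G. f g = transl_num (\<phi> g)" and
    hq: "homogeneous_qm G f" and nz: "\<exists>g\<in>carrier G. f g \<noteq> 0"
    unfolding circular_qm_def by blast
  have "circ G \<phi> f" unfolding circ_def circ_axioms_def using assms(1) p1 p2 p3 p4 hq nz by blast
  then interpret C: circ G \<phi> f .
  have part1: "\<exists>rel. left_inv_total_order G rel \<and> growth_multiples G (induced_le G rel) f"
    using C.lexrel_order C.lexrel_growth by blast
  obtain t where t: "t \<in> carrier G" "f t > 0" using C.f_pos_exists by blast
  have r0li: "left_invariant G C.rel0" by (rule C.rel0_li)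
  have "realizes G C.rel0 (\<lambda>x. x \<otimes>\<^bsub>G\<^esub> t) f"
    by (rule C.realizes_gen[OF r0li t(1) _ C.rel0_growth]) (simp add: C.rel0_def)
  then have part2: "\<exists>rel0 T rel. quasi_total_triple (carrier G) rel0 T \<and> realizes G rel0 T f \<and>
                     refines (carrier G) rel rel0 \<and> left_inv_total_order G rel"
    using C.rel0_qt[OF t] C.lexrel_refines C.lexrel_order by blast
  have part3: "(\<exists>rel T. total_triple (carrier G) rel T \<and> realizes G rel T f)"
    if nb: "\<not> (\<exists>B. \<forall>z\<in>group_center G. \<bar>f z\<bar> \<le> B)"
  proof -
    obtain z where z: "z \<in> group_center G" "\<bar>f z\<bar> > 0" using nb by (metis not_le)
    then have zc: "z \<in> carrier G" and zcom: "\<And>g. g \<in> carrier G \<Longrightarrow> z \<otimes>\<^bsub>G\<^esub> g = g \<otimes>\<^bsub>G\<^esub> z"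
      by (auto simp: group_center_def)
    obtain s where s: "s \<in> carrier G" "f s > 0" "\<And>g. g \<in> carrier G \<Longrightarrow> s \<otimes>\<^bsub>G\<^esub> g = g \<otimes>\<^bsub>G\<^esub> s"
    proof (cases "f z > 0")
      case True then show ?thesis using that zc zcom by blast
    next
      case False
      then have "f (inv\<^bsub>G\<^esub> z) > 0" using z(2) C.f_inv[OF zc] by simp
      moreover have "inv\<^bsub>G\<^esub> z \<in> carrier G" using zc by simp
      ultimately show ?thesis using that C.central_inv[OF zc zcom] by blast
    qed
    have lo: "left_inv_total_order G C.lexrel" by (rule C.lexrel_order)
    have "realizes G C.lexrel (\<lambda>x. x \<otimes>\<^bsub>G\<^esub> s) f"
      by (rule C.realizes_gen[OF _ s(1) _ C.lexrel_growth])
        (use lo in \<open>auto simp: left_inv_total_order_def C.lexrel_def\<close>)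
    then show ?thesis using C.lex_tt[OF s] by blast
  qed
  show ?thesis using part1 part2 part3 by blast
qed



end
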